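(* Let $\Pi\in\boldsymbol{\Pi}_{q,r}$. Then: (a) $\mathcal{Z}_r(\Pi)$ is nonempty and convex. (b) $\mathcal{Z}_r(\Pi)$ is bounded if and only if $\Pi_{22}<0$. (c) $\mathcal{Z}_r(\Pi)$ has nonempty interior (in $\mathbb{R}^{r\times q}$) if and only if $\Pi_{22}=0$ or $\Pi\mid\Pi_{22}>0$. (d) $\mathcal{Z}_r^+(\Pi)$ is nonempty if and only if $\Pi\mid\Pi_{22}>0$. (e) $\mathcal{Z}_r^0(\Pi)$ is nonempty if and only if $\operatorname{rank}\Pi_{22}\geq\operatorname{rank}(\Pi\mid\Pi_{22})$.
   Context: $\mathbb{S}^k$ denotes the real symmetric $k\times k$ matrices; for symmetric matrices, $A\ge 0$ ($A>0$) means positive semidefinite (definite), $A\le 0$, $A<0$ analogously, and $A\le B$ means $B-A\ge 0$. $A^\dagger$ is the Moore–Penrose pseudo-inverse. Any $\Pi\in\mathbb{S}^{q+r}$ is partitioned as $\Pi=\begin{bmatrix}\Pi_{11}&\Pi_{12}\\ \Pi_{21}&\Pi_{22}\end{bmatrix}$ with $\Pi_{11}\in\mathbb{S}^q$, $\Pi_{22}\in\mathbb{S}^r$, $\Pi_{21}=\Pi_{12}^\top$. The generalized Schur complement is $\Pi\mid\Pi_{22}:=\Pi_{11}-\Pi_{12}\Pi_{22}^\dagger\Pi_{21}$. The set $\boldsymbol{\Pi}_{q,r}$ consists of all $\Pi\in\mathbb{S}^{q+r}$ with $\Pi_{22}\le 0$, $\Pi\mid\Pi_{22}\ge 0$ and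 $\ker\Pi_{22}\subseteq\ker\Pi_{12}$. Define $\mathcal{Z}_r(\Pi)=\{Z\in\mathbb{R}^{r\times q}:\begin{bmatrix}I_q\\ Z\end{bmatrix}^\top\Pi\begin{bmatrix}I_q\\ Z\end{bmatrix}\ge 0\}$, $\mathcal{Z}_r^+(\Pi)$ the same with $>0$, and $\mathcal{Z}_r^0(\Pi)$ the same with $=0$. *)

theory Defs
  imports "HOL-Analysis.Analysis"
begin

text \<open>Matrices are HOL-Analysis matrices real^'n^'m (m rows, n columns).
  A symmetric (q+r)x(q+r) matrix has index type 'q + 'r; Inl indexes the first q
  coordinates, Inr the last r.\<close>

definition sym_mat :: "real^'n^'n \<Rightarrow> bool" where
  "sym_mat A \<longleftrightarrow> transpose A = A"

definition psd :: "real^'n^'n \<Rightarrow> bool" where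
  "psd A \<longleftrightarrow> (\<forall>x. 0 \<le> x \<bullet> (A *v x))"

definition pd :: "real^'n^'n \<Rightarrow> bool" where
  "pd A \<longleftrightarrow> (\<forall>x. x \<noteq> 0 \<longrightarrow> 0 < x \<bullet> (A *v x))"

definition nsd :: "real^'n^'n \<Rightarrow> bool" where
  "nsd A \<longleftrightarrow> psd (- A)"

definition nd :: "real^'n^'n \<Rightarrow> bool" where
  "nd A \<longleftrightarrow> pd (- A)"

text \<open>Moore--Penrose pseudo-inverse: the unique matrix satisfying the Penrose conditions.\<close>
definition mp_pinv :: "real^'n^'m \<Rightarrow> real^'m^'n" where
  "mp_pinv A = (THE X. A ** X ** A = A \<and> X ** A ** X = X \<and>
                       transpose (A ** X) = A ** X \<and> transpose (X ** A) = X ** A)"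

definition mker :: "real^'n^'m \<Rightarrow> (real^'n) set" where
  "mker A = {x. A *v x = 0}"

definition blk11 :: "real^('q::finite + 'r::finite)^('q + 'r) \<Rightarrow> real^'q^'q" where
  "blk11 P = (\<chi> i j. P $ Inl i $ Inl j)"
definition blk12 :: "real^('q::finite + 'r::finite)^('q + 'r) \<Rightarrow> real^'r^'q" where
  "blk12 P = (\<chi> i j. P $ Inl i $ Inr j)"
definition blk21 :: "real^('q::finite + 'r::finite)^('q + 'r) \<Rightarrow> real^'q^'r" where
  "blk21 P = (\<chi> i j. P $ Inr i $ Inl j)"
definition blk22 :: "real^('q::finite + 'r::finite)^('q + 'r) \<Rightarrow> real^'r^'r" where
  "blk22 P = (\<chi> i j. P $ Inr i $ Inr j)"

text \<open>Generalized Schur complement  Pi | Pi22 = Pi11 - Pi12 Pi22^dagger Pi21.\<close>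
definition schur :: "real^('q::finite + 'r::finite)^('q + 'r) \<Rightarrow> real^'q^'q" where
  "schur P = blk11 P - blk12 P ** mp_pinv (blk22 P) ** blk21 P"

definition PiSet :: "(real^('q::finite + 'r::finite)^('q + 'r)) set" where
  "PiSet = {P. sym_mat P \<and> nsd (blk22 P) \<and> psd (schur P) \<and>
               mker (blk22 P) \<subseteq> mker (blk12 P)}"

text \<open>The stacked matrix [I_q; Z] for Z an r x q matrix.\<close>
definition stackIZ :: "real^'q^'r \<Rightarrow> real^'q^('q::finite + 'r::finite)" where
  "stackIZ Z = (\<chi> k j. case k of Inl i \<Rightarrow> (if i = j then 1 else 0) | Inr i \<Rightarrow> Z $ i $ j)"

definition qform :: "real^('q::finite + 'r::finite)^('q + 'r) \<Rightarrow> real^'q^'r \<Rightarrow> real^'q^'q" where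
  "qform P Z = transpose (stackIZ Z) ** P ** stackIZ Z"

definition Zr :: "real^('q::finite + 'r::finite)^('q + 'r) \<Rightarrow> (real^'q^'r) set" where
  "Zr P = {Z. psd (qform P Z)}"
definition Zr_plus :: "real^('q::finite + 'r::finite)^('q + 'r) \<Rightarrow> (real^'q^'r) set" where
  "Zr_plus P = {Z. pd (qform P Z)}"
definition Zr_zero :: "real^('q::finite + 'r::finite)^('q + 'r) \<Rightarrow> (real^'q^'r) set" where
  "Zr_zero P = {Z. qform P Z = 0}"

end

theory Submission
  imports Defs
begin


lemma dot_transpose: "(transpose M *v x) \<bullet> (y::real^'n) = x \<bullet> (M *v y)"
  by (simp add: dot_lmul_matrix)

lemma vec_eq_by_dot:
  assumes "\<And>y. a \<bullet> y = b \<bullet> (y::real^'n)" shows "a = b"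
proof -
  have "(a - b) \<bullet> (a - b) = 0" using assms[of "a - b"] by (simp add: inner_diff_left)
  then show ?thesis by simp
qed

lemma sym_by_dot:
  fixes M :: "real^'n^'n"
  assumes "\<And>x y. y \<bullet> (M *v x) = x \<bullet> (M *v y)" shows "transpose M = M"
  unfolding matrix_eq
proof
  fix x show "transpose M *v x = M *v x"
    by (rule vec_eq_by_dot) (metis dot_transpose assms inner_commute)
qed

lemma sym_dot:
  fixes M :: "real^'n^'n"
  assumes "transpose M = M" shows "y \<bullet> (M *v x) = x \<bullet> (M *v y)"
  using dot_transpose[of M x y] assms by (simp add: inner_commute)

lemma mp_exists:
  fixes A :: "real^'n^'n"
  assumes symA: "transpose A = A"
  shows "\<exists>X. A ** X ** A = A \<and> X ** A ** X = X \<and> transpose (A ** X) = A ** X \<and> transpose (X ** A) = X ** A"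
proof -
  define R where "R = range ((*v) A)"
  have subR: "subspace R" unfolding R_def
    by (rule linear_subspace_image[OF matrix_vector_mul_linear subspace_UNIV])
  have ortho: "z \<bullet> y = 0" if h: "A *v z = 0" "y \<in> R" for z y
  proof -
    obtain t where "y = A *v t" using h(2) R_def by auto
    then show ?thesis using sym_dot[OF symA, of z t] h(1) by simp
  qed
  have inj: "inj_on ((*v) A) R"
  proof (rule inj_onI)
    fix u v assume uv: "u \<in> R" "v \<in> R" "A *v u = A *v v"
    have "A *v (u - v) = 0" using uv(3) by (simp add: matrix_vector_mult_diff_distrib)
    moreover have "u - v \<in> R" using subR uv by (simp add: subspace_diff)
    ultimately have "(u - v) \<bullet> (u - v) = 0" using ortho by blast
    then show "u = v" by simp
  qed
  obtain g where g: "g ` UNIV \<subseteq> R" "linear g" "\<And>v. v \<in> R \<Longrightarrow> g (A *v v) = v"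
    using linear_exists_left_inverse_on[OF matrix_vector_mul_linear subR inj] by blast
  have dec: "\<exists>y\<in>R. A *v x = A *v y" for x
  proof -
    obtain y z where yz: "y \<in> span R" "\<And>w. w \<in> span R \<Longrightarrow> orthogonal z w" "x = y + z"
      using orthogonal_subspace_decomp_exists by blast
    have spR: "span R = R" using subR by (simp add: span_eq_iff)
    have "A *v (A *v z) \<in> R" unfolding R_def by auto
    then have "z \<bullet> (A *v (A *v z)) = 0" using yz(2) spR by (auto simp: orthogonal_def)
    then have "(A *v z) \<bullet> (A *v z) = 0" using sym_dot[OF symA, of "A *v z" z] by simp
    then have "A *v z = 0" by simp
    then show ?thesis using yz spR by (auto simp: matrix_vector_right_distrib)
  qed
  have AgR: "A *v g y = y" if hy: "y \<in> R" for y
  proof -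
    obtain t where t: "y = A *v t" using hy R_def by auto
    obtain v where v: "v \<in> R" "A *v t = A *v v" using dec by blast
    show ?thesis using g(3)[OF v(1)] t v by simp
  qed
  define G where "G = matrix g"
  have Gx: "G *v x = g x" for x unfolding G_def using g(2) by (simp add: matrix_works)
  define P where "P = G ** A"
  have Px: "P *v x = g (A *v x)" for x by (simp add: P_def Gx matrix_vector_mul_assoc[symmetric])
  have gR: "g x \<in> R" for x using g(1) by auto
  have PR: "P *v x \<in> R" for x using Px gR by simp
  have Pid: "P *v y = y" if "y \<in> R" for y using that Px g(3) by simp
  have Pker: "A *v (x - P *v x) = 0" for x
    using AgR[of "A *v x"] by (simp add: Px matrix_vector_mult_diff_distrib R_def)
  have Porth: "(x - P *v x) \<bullet> y = 0" if "y \<in> R" for x y using ortho[OF Pker that] .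
  have Psym: "transpose P = P"
  proof (rule sym_by_dot)
    fix x y
    have "y \<bullet> (P *v x) = (P *v y) \<bullet> (P *v x)"
      using Porth[OF PR, of y x] by (simp add: inner_diff_left)
    moreover have "x \<bullet> (P *v y) = (P *v x) \<bullet> (P *v y)"
      using Porth[OF PR, of x y] by (simp add: inner_diff_left)
    ultimately show "y \<bullet> (P *v x) = x \<bullet> (P *v y)" by (simp add: inner_commute)
  qed
  have AP: "A ** P = A" unfolding matrix_eq
    using Pker by (simp add: matrix_vector_mul_assoc[symmetric] matrix_vector_mult_diff_distrib)
  have PA: "P ** A = A"
    using arg_cong[OF AP, of transpose] by (simp add: matrix_transpose_mul Psym symA)
  have PG: "P ** G = G" unfolding matrix_eq
    by (simp add: matrix_vector_mul_assoc[symmetric] Gx Pid gR)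
  define X where "X = G ** P"
  have AX: "A ** X = P" unfolding matrix_eq X_def
    by (simp add: matrix_vector_mul_assoc[symmetric] Gx AgR PR)
  have XA: "X ** A = P" unfolding X_def
    by (metis PA P_def matrix_mul_assoc)
  have "A ** X ** A = A" by (simp add: AX PA)
  moreover have "X ** A ** X = X"
  proof -
    have "X ** A ** X = P ** X" by (simp only: XA)
    also have "\<dots> = P ** (G ** P)" by (simp only: X_def)
    also have "\<dots> = (P ** G) ** P" by (rule matrix_mul_assoc)
    finally show ?thesis by (simp only: PG X_def)
  qed
  moreover have "transpose (A ** X) = A ** X" by (simp only: AX Psym)
  moreover have "transpose (X ** A) = X ** A" by (simp only: XA Psym)
  ultimately show ?thesis by (intro exI[of _ X] conjI)
qed

lemma mp_unique:
  fixes A :: "real^'n^'m" and X Y :: "real^'m^'n"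
  assumes X1: "A ** X ** A = A" and X2: "X ** A ** X = X"
    and X3: "transpose (A ** X) = A ** X" and X4: "transpose (X ** A) = X ** A"
    and Y1: "A ** Y ** A = A" and Y2: "Y ** A ** Y = Y"
    and Y3: "transpose (A ** Y) = A ** Y" and Y4: "transpose (Y ** A) = Y ** A"
  shows "X = Y"
proof -
  have "transpose A = transpose ((A ** Y) ** A)" using Y1 by simp
  also have "\<dots> = transpose A ** transpose (A ** Y)" by (rule matrix_transpose_mul)
  finally have TA1: "transpose A = transpose A ** (A ** Y)" using Y3 by simp
  have "transpose A = transpose (A ** (X ** A))" using X1 by (simp add: matrix_mul_assoc)
  also have "\<dots> = transpose (X ** A) ** transpose A" by (rule matrix_transpose_mul)
  finally have TA2: "transpose A = (X ** A) ** transpose A" using X4 by simp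
  have "X = X ** (A ** X)" using X2 by (simp add: matrix_mul_assoc)
  also have "\<dots> = X ** (transpose X ** transpose A)" using X3 by (simp add: matrix_transpose_mul)
  also have "\<dots> = X ** (transpose X ** (transpose A ** (A ** Y)))" using TA1 by simp
  also have "\<dots> = X ** (transpose X ** transpose A) ** A ** Y" by (simp add: matrix_mul_assoc)
  also have "\<dots> = X ** (A ** X) ** A ** Y" using X3 by (simp add: matrix_transpose_mul)
  also have "\<dots> = X ** A ** Y" using X2 by (simp add: matrix_mul_assoc)
  finally have eX: "X = X ** A ** Y" .
  have "Y = (Y ** A) ** Y" using Y2 by simp
  also have "\<dots> = (transpose A ** transpose Y) ** Y" using Y4 by (metis matrix_transpose_mul)
  also have "\<dots> = ((X ** A) ** transpose A ** transpose Y) ** Y" using TA2 by simp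
  also have "\<dots> = X ** A ** (transpose A ** transpose Y) ** Y" by (simp add: matrix_mul_assoc)
  also have "\<dots> = X ** A ** (Y ** A) ** Y" using Y4 by (metis matrix_transpose_mul)
  also have "\<dots> = X ** A ** Y" using Y2 by (metis matrix_mul_assoc)
  finally show ?thesis using eX by simp
qed

lemma mp_pinv_props:
  fixes A :: "real^'n^'n"
  assumes "transpose A = A"
  shows "A ** mp_pinv A ** A = A \<and> mp_pinv A ** A ** mp_pinv A = mp_pinv A \<and>
    transpose (A ** mp_pinv A) = A ** mp_pinv A \<and> transpose (mp_pinv A ** A) = mp_pinv A ** A"
proof -
  obtain X where X: "A ** X ** A = A \<and> X ** A ** X = X \<and> transpose (A ** X) = A ** X \<and> transpose (X ** A) = X ** A"
    using mp_exists[OF assms] by blast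
  have "mp_pinv A = X" unfolding mp_pinv_def
    by (rule the_equality) (use X mp_unique in blast)+
  then show ?thesis using X by simp
qed



lemma sum_UNIV_plus:
  "sum f (UNIV :: ('a::finite + 'b::finite) set) = sum (f \<circ> Inl) UNIV + sum (f \<circ> Inr) UNIV"
  using sum.Plus[of "UNIV::'a set" "UNIV::'b set" f] by simp

definition stk :: "real^'q \<Rightarrow> real^'r \<Rightarrow> real^('q::finite + 'r::finite)" where
  "stk u w = (\<chi> k. case k of Inl i \<Rightarrow> u $ i | Inr i \<Rightarrow> w $ i)"

lemma stk_Inl[simp]: "stk u w $ Inl i = u $ i" and stk_Inr[simp]: "stk u w $ Inr i = w $ i"
  by (simp_all add: stk_def)

lemma sum_delta1: "(\<Sum>j\<in>UNIV. (if i = j then 1 else 0) * (x j::real)) = x (i::'a::finite)"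
proof -
  have e: "(\<lambda>j. (if i = j then 1 else 0) * x j) = (\<lambda>j. if i = j then x j else 0)" by auto
  then show ?thesis unfolding e by (simp add: sum.delta sum.delta')
qed
lemma sum_delta2: "(\<Sum>j\<in>UNIV. (if j = i then 1 else 0) * (x j::real)) = x (i::'a::finite)"
proof -
  have e: "(\<lambda>j. (if j = i then 1 else 0) * x j) = (\<lambda>j. if i = j then x j else 0)" by auto
  then show ?thesis unfolding e by (simp add: sum.delta sum.delta')
qed
lemma sum_delta3: "(\<Sum>j\<in>UNIV. (x j::real) * (if j = i then 1 else 0)) = x (i::'a::finite)"
proof -
  have e: "(\<lambda>j. x j * (if j = i then 1 else 0)) = (\<lambda>j. if i = j then x j else 0)" by auto
  then show ?thesis unfolding e by (simp add: sum.delta sum.delta')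
qed

lemma stackIZ_mv: "stackIZ Z *v x = stk x (Z *v x)"
  by (simp add: vec_eq_iff stackIZ_def matrix_vector_mult_def stk_def sum_UNIV_plus o_def
      sum_delta1 sum_delta2 split: sum.split)

lemma P_mv_stk:
  "P *v stk u w = stk (blk11 P *v u + blk12 P *v w) (blk21 P *v u + blk22 P *v w)"
  apply (simp add: vec_eq_iff stk_def split: sum.split)
  apply (simp add: matrix_vector_mult_def sum_UNIV_plus o_def blk11_def blk12_def blk21_def blk22_def)
  done

lemma stackIZT_mv: "stk a b v* stackIZ Z = a + b v* Z"
  by (simp add: vec_eq_iff stackIZ_def vector_matrix_mult_def sum_UNIV_plus o_def
      sum_delta3 stk_def mult.commute)

lemma qform_blocks:
  "qform P Z = blk11 P + blk12 P ** Z + transpose Z ** blk21 P + transpose Z ** blk22 P ** Z"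
  unfolding matrix_eq qform_def
  by (simp add: matrix_vector_mul_assoc[symmetric] stackIZ_mv P_mv_stk stackIZT_mv
      matrix_vector_mult_add_rdistrib matrix_vector_right_distrib algebra_simps)



lemma madd_r: "((A::real^'n^'m) + B) ** C = A ** C + B ** C"
  by (vector matrix_matrix_mult_def sum.distrib distrib_right)
lemma mdiff_r: "((A::real^'n^'m) - B) ** C = A ** C - B ** C"
  by (vector matrix_matrix_mult_def sum_subtractf left_diff_distrib)
lemma mdiff_l: "(C::real^'n^'m) ** (A - B) = C ** A - C ** B"
  by (vector matrix_matrix_mult_def sum_subtractf right_diff_distrib)
lemma mneg_l: "(- (A::real^'n^'m)) ** C = - (A ** C)"
  by (vector matrix_matrix_mult_def sum_negf)
lemma mneg_r: "(C::real^'n^'m) ** (- A) = - (C ** A)"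
  by (vector matrix_matrix_mult_def sum_negf)
lemma transpose_add: "transpose ((A::real^'n^'m) + B) = transpose A + transpose B"
  by (simp add: transpose_def vec_eq_iff)
lemma transpose_diff: "transpose ((A::real^'n^'m) - B) = transpose A - transpose B"
  by (simp add: transpose_def vec_eq_iff)
lemma transpose_neg: "transpose (- (A::real^'n^'m)) = - transpose A"
  by (simp add: transpose_def vec_eq_iff)

lemma key_identity:
  fixes A X :: "real^'r^'r" and B :: "real^'r^'q" and D :: "real^'q^'q" and Z :: "real^'q^'r"
  assumes symA: "transpose A = A" and AXA: "A ** X ** A = A"
    and AXs: "transpose (A ** X) = A ** X"
    and ker: "\<And>v. A *v v = 0 \<Longrightarrow> B *v v = 0"
  shows "D + B ** Z + transpose Z ** transpose B + transpose Z ** A ** Z =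
     (D - B ** X ** transpose B) + transpose (Z + X ** transpose B) ** A ** (Z + X ** transpose B)"
    and "transpose (B ** X ** transpose B) = B ** X ** transpose B"
proof -
  let ?C = "transpose B"
  have "transpose ((A ** X) ** A) = transpose A ** transpose (A ** X)" by (rule matrix_transpose_mul)
  then have AAX: "A ** (A ** X) = A" by (simp only: AXA symA AXs)
  have AAX2: "A ** A ** X = A" using AAX by (simp add: matrix_mul_assoc)
  have BAX: "B ** A ** X = B" unfolding matrix_eq
  proof
    fix y
    have "A *v (y - (A ** X) *v y) = 0"
      by (simp add: matrix_vector_mult_diff_distrib matrix_vector_mul_assoc AAX AAX2)
    then have "B *v (y - (A ** X) *v y) = 0" by (rule ker)
    then show "(B ** A ** X) *v y = B *v y"
      by (simp add: matrix_vector_mult_diff_distrib matrix_vector_mul_assoc matrix_mul_assoc)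
  qed
  have F2: "transpose X ** A = A ** X" using AXs by (simp add: matrix_transpose_mul symA)
  have F3: "B ** transpose X ** A = B"
    by (metis F2 BAX matrix_mul_assoc)
  have F1: "A ** X ** ?C = ?C"
  proof -
    have "transpose (B ** A ** X) = ?C" using BAX by simp
    then have "transpose X ** A ** ?C = ?C" by (simp add: matrix_transpose_mul symA matrix_mul_assoc)
    then show ?thesis using F2 by simp
  qed
  have tW: "transpose (Z + X ** ?C) = transpose Z + B ** transpose X"
    by (simp add: transpose_add matrix_transpose_mul)
  have e1: "transpose Z ** A ** (X ** ?C) = transpose Z ** ?C"
    by (metis F1 matrix_mul_assoc)
  have e2: "B ** transpose X ** A ** Z = B ** Z" using F3 by simp
  have e3: "B ** transpose X ** A ** (X ** ?C) = B ** X ** ?C"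
  proof -
    have "B ** transpose X ** A ** (X ** ?C) = (B ** transpose X ** A) ** X ** ?C"
      by (simp add: matrix_mul_assoc)
    then show ?thesis using F3 by simp
  qed
  have "transpose (Z + X ** ?C) ** A ** (Z + X ** ?C) =
     transpose Z ** A ** Z + transpose Z ** A ** (X ** ?C) + B ** transpose X ** A ** Z
       + B ** transpose X ** A ** (X ** ?C)"
    unfolding tW by (simp add: madd_r matrix_add_ldistrib)
  also have "\<dots> = transpose Z ** A ** Z + transpose Z ** ?C + B ** Z + B ** X ** ?C"
    by (simp only: e1 e2 e3)
  finally show "D + B ** Z + transpose Z ** transpose B + transpose Z ** A ** Z =
     (D - B ** X ** transpose B) + transpose (Z + X ** transpose B) ** A ** (Z + X ** transpose B)"
    by (simp add: algebra_simps)
  have "B ** X ** ?C = B ** transpose X ** A ** X ** ?C" using F3 by simp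
  also have "\<dots> = B ** transpose X ** ?C" using F1 by (metis matrix_mul_assoc)
  finally show "transpose (B ** X ** transpose B) = B ** X ** transpose B"
    by (simp add: matrix_transpose_mul matrix_mul_assoc)
qed



lemma qf_expand:
  fixes N :: "real^'n^'n"
  assumes "transpose N = N"
  shows "(x + t *\<^sub>R z) \<bullet> (N *v (x + t *\<^sub>R z)) =
    x \<bullet> (N *v x) + 2 * t * (z \<bullet> (N *v x)) + t^2 * (z \<bullet> (N *v z))"
proof -
  have "x \<bullet> (N *v z) = z \<bullet> (N *v x)" using sym_dot[OF assms] by simp
  then show ?thesis
    by (simp add: matrix_vector_right_distrib matrix_vector_mult_scaleR inner_add_left
        inner_add_right power2_eq_square algebra_simps)
qed

lemma psd_zero_imp:
  fixes N :: "real^'n^'n"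
  assumes symN: "transpose N = N" and "psd N" and h: "x \<bullet> (N *v x) = 0"
  shows "N *v x = 0"
proof (rule ccontr)
  assume ne: "N *v x \<noteq> 0"
  let ?z = "N *v x"
  define b where "b = ?z \<bullet> ?z"
  define a where "a = ?z \<bullet> (N *v ?z)"
  have bpos: "b > 0" using ne b_def by simp
  have a0: "a \<ge> 0" using assms(2) a_def psd_def by blast
  define t where "t = - b / (a + 1)"
  have "0 \<le> (x + t *\<^sub>R ?z) \<bullet> (N *v (x + t *\<^sub>R ?z))" using assms(2) psd_def by blast
  also have "\<dots> = 2 * t * b + t^2 * a"
    using qf_expand[OF symN, of x t ?z] h by (simp add: a_def b_def)
  finally have ineq: "0 \<le> 2 * t * b + t^2 * a" .
  have a1: "a + 1 \<noteq> 0" using a0 by simp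
  have t1: "(a+1) * t = -b" unfolding t_def using a1 by simp
  have "(a+1)^2 * (2 * t * b + t^2 * a) = 2*b*(a+1)*((a+1)*t) + a*((a+1)*t)^2"
    by (simp add: power2_eq_square algebra_simps)
  also have "\<dots> = b^2 * (- a - 2)" unfolding t1 by (simp add: power2_eq_square algebra_simps)
  finally have "(a+1)^2 * (2 * t * b + t^2 * a) = b^2 * (- a - 2)" .
  moreover have "b^2 * (- a - 2) < 0"
    using a0 bpos by (intro mult_pos_neg) auto
  moreover have "(a+1)^2 * (2 * t * b + t^2 * a) \<ge> 0" using ineq by simp
  ultimately show False by linarith
qed

lemma psd_cs:
  fixes N :: "real^'n^'n"
  assumes symN: "transpose N = N" and "psd N" and c: "y \<bullet> (N *v y) > 0"
  shows "(x \<bullet> (N *v y))^2 \<le> (x \<bullet> (N *v x)) * (y \<bullet> (N *v y))"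
proof -
  define b where "b = y \<bullet> (N *v x)"
  define c where "c = y \<bullet> (N *v y)"
  have cpos: "c > 0" using assms c_def by simp
  have bx: "x \<bullet> (N *v y) = b" using sym_dot[OF symN] b_def by simp
  define t where "t = - b / c"
  have "0 \<le> (x + t *\<^sub>R y) \<bullet> (N *v (x + t *\<^sub>R y))" using assms(2) psd_def by blast
  also have "\<dots> = x \<bullet> (N *v x) + 2 * t * b + t^2 * c"
    using qf_expand[OF symN, of x t y] by (simp add: b_def c_def)
  also have "\<dots> = x \<bullet> (N *v x) - b^2 / c"
    unfolding t_def using cpos by (simp add: field_simps power2_eq_square)
  finally have "b^2 / c \<le> x \<bullet> (N *v x)" by simp
  then have "b^2 \<le> x \<bullet> (N *v x) * c" using cpos by (simp add: divide_le_eq)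
  then show ?thesis using bx c_def by simp
qed

definition outer :: "real^'n \<Rightarrow> real^'n^'n" where
  "outer v = (\<chi> i j. v $ i * v $ j)"

lemma outer_mv: "outer v *v x = (v \<bullet> x) *\<^sub>R v"
  by (simp add: outer_def vec_eq_iff matrix_vector_mult_def inner_vec_def sum_distrib_left
      algebra_simps)

lemma outer_sym: "transpose (outer v) = outer v"
  by (simp add: outer_def transpose_def vec_eq_iff mult.commute)

lemma sumlist_mv: "sum_list (map outer vs) *v x = sum_list (map (\<lambda>v. (v \<bullet> x) *\<^sub>R v) vs)"
  by (induction vs) (simp_all add: matrix_vector_mult_add_rdistrib outer_mv)

lemma sumlist_span: "sum_list (map (\<lambda>v. f v *\<^sub>R v) vs) \<in> span (set vs)"
proof (induction vs)
  case Nil then show ?case by (simp add: span_zero)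
next
  case (Cons a vs)
  have "f a *\<^sub>R a \<in> span (set (a # vs))" by (simp add: span_base span_mul)
  moreover have "sum_list (map (\<lambda>v. f v *\<^sub>R v) vs) \<in> span (set (a # vs))"
    using Cons span_mono[of "set vs" "set (a # vs)"] by auto
  ultimately show ?case by (simp add: span_add)
qed

lemma psd_decomp:
  fixes N :: "real^'n^'n"
  assumes "transpose N = N" "psd N"
  shows "\<exists>vs. distinct vs \<and> independent (set vs) \<and> set vs \<subseteq> range ((*v) N) \<and>
           N = sum_list (map outer vs)"
  using assms
proof (induction "rank N" arbitrary: N rule: less_induct)
  case less
  show ?case
  proof (cases "N = 0")
    case True
    then show ?thesis by (intro exI[of _ "[]"]) (auto simp: independent_empty)
  next
    case False
    then obtain e where Ne: "N *v e \<noteq> 0" by (metis matrix_eq matrix_vector_mult_0)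
    define c where "c = e \<bullet> (N *v e)"
    have "c \<ge> 0" using less.prems psd_def c_def by blast
    moreover have "c \<noteq> 0" using psd_zero_imp[OF less.prems, of e] Ne unfolding c_def by blast
    ultimately have cpos: "c > 0" by simp
    define s where "s = sqrt c"
    have spos: "s > 0" using cpos s_def by simp
    have ss: "s * s = c" using cpos s_def by simp
    define v where "v = (1 / s) *\<^sub>R (N *v e)"
    define N' where "N' = N - outer v"
    have N'x: "N' *v x = N *v x - (v \<bullet> x) *\<^sub>R v" for x
      by (simp add: N'_def matrix_vector_mult_diff_rdistrib outer_mv)
    have symN': "transpose N' = N'" using less.prems(1)
      by (simp add: N'_def transpose_diff outer_sym)
    have ve: "v \<bullet> e = s"
    proof -
      have "(N *v e) \<bullet> e = c" using c_def by (simp add: inner_commute)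
      then show ?thesis using spos ss by (simp add: v_def field_simps)
    qed
    have psdN': "psd N'" unfolding psd_def
    proof
      fix x
      have "(x \<bullet> (N *v e))^2 \<le> (x \<bullet> (N *v x)) * c"
        using psd_cs[OF less.prems, of e x] cpos c_def by simp
      moreover have "(v \<bullet> x)^2 = (x \<bullet> (N *v e))^2 / c"
        using spos ss by (simp add: v_def inner_commute power2_eq_square field_simps)
      ultimately have "(v \<bullet> x)^2 \<le> x \<bullet> (N *v x)" using cpos
        by (simp add: divide_le_eq mult.commute)
      then show "0 \<le> x \<bullet> (N' *v x)"
        by (simp add: N'x inner_diff_right power2_eq_square inner_commute)
    qed
    have "N' *v e = N *v e - s *\<^sub>R v" by (simp only: N'x ve)
    also have "\<dots> = 0" using spos by (simp add: v_def)
    finally have N'e: "N' *v e = 0" .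
    have vR: "v \<in> range ((*v) N)"
      by (rule range_eqI[of _ _ "(1/s) *\<^sub>R e"]) (simp add: v_def matrix_vector_mult_scaleR)
    have sub: "range ((*v) N') \<subseteq> range ((*v) N)"
    proof
      fix y assume "y \<in> range ((*v) N')"
      then obtain x where x: "y = N' *v x" by auto
      have "y = N *v (x - ((v \<bullet> x) / s) *\<^sub>R e)"
        by (simp add: x N'x matrix_vector_mult_diff_distrib matrix_vector_mult_scaleR v_def)
      then show "y \<in> range ((*v) N)" by auto
    qed
    have vnot: "v \<notin> range ((*v) N')"
    proof
      assume "v \<in> range ((*v) N')"
      then obtain y where y: "v = N' *v y" by auto
      have "v \<bullet> e = e \<bullet> (N' *v y)" by (simp add: y inner_commute)
      also have "\<dots> = y \<bullet> (N' *v e)" by (rule sym_dot[OF symN'])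
      also have "\<dots> = 0" by (simp add: N'e)
      finally show False using ve spos by simp
    qed
    have subR': "subspace (range ((*v) N'))"
      by (rule linear_subspace_image[OF matrix_vector_mul_linear subspace_UNIV])
    have subR: "subspace (range ((*v) N))"
      by (rule linear_subspace_image[OF matrix_vector_mul_linear subspace_UNIV])
    have "range ((*v) N') \<subset> range ((*v) N)" using sub vnot vR by blast
    then have "dim (range ((*v) N')) < dim (range ((*v) N))"
      by (intro dim_psubset) (simp add: span_eq_iff[THEN iffD2, OF subR] span_eq_iff[THEN iffD2, OF subR'])
    then have "rank N' < rank N" by (simp add: rank_dim_range)
    then obtain vs where vs: "distinct vs" "independent (set vs)" "set vs \<subseteq> range ((*v) N')"
      "N' = sum_list (map outer vs)"
      using less.hyps[OF _ symN' psdN'] by blast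
    have "span (set vs) \<subseteq> range ((*v) N')" by (rule span_minimal[OF vs(3) subR'])
    then have vspan: "v \<notin> span (set vs)" using vnot by blast
    show ?thesis
    proof (intro exI[of _ "v # vs"] conjI)
      show "distinct (v # vs)" using vs(1,3) vnot by auto
      show "independent (set (v # vs))" using vs(2) vspan by (simp add: independent_insertI)
      show "set (v # vs) \<subseteq> range ((*v) N)" using vs(3) sub vR by auto
      show "N = sum_list (map outer (v # vs))" using vs(4) unfolding N'_def by (metis add.commute diff_add_cancel list.simps(9) sum_list.Cons)
    qed
  qed
qed

lemma psd_decomp_rank:
  fixes N :: "real^'n^'n"
  assumes "transpose N = N" "psd N"
  shows "\<exists>vs. distinct vs \<and> independent (set vs) \<and> N = sum_list (map outer vs) \<and> length vs = rank N"
proof -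
  obtain vs where vs: "distinct vs" "independent (set vs)" "set vs \<subseteq> range ((*v) N)"
    "N = sum_list (map outer vs)" using psd_decomp[OF assms] by blast
  have subR: "subspace (range ((*v) N))"
    by (rule linear_subspace_image[OF matrix_vector_mul_linear subspace_UNIV])
  have "range ((*v) N) = span (set vs)"
  proof
    show "span (set vs) \<subseteq> range ((*v) N)" by (rule span_minimal[OF vs(3) subR])
    show "range ((*v) N) \<subseteq> span (set vs)"
    proof
      fix y assume "y \<in> range ((*v) N)"
      then obtain x where "y = N *v x" by auto
      then have "y = sum_list (map (\<lambda>v. (v \<bullet> x) *\<^sub>R v) vs)" using vs(4) sumlist_mv by metis
      then show "y \<in> span (set vs)" using sumlist_span[of "\<lambda>v. v \<bullet> x" vs] by simp
    qed
  qed
  then have "rank N = card (set vs)"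
    by (metis rank_dim_range dim_span dim_span_eq_card_independent vs(2))
  then show ?thesis using vs distinct_card by fastforce
qed



definition QN :: "real^'q^'q \<Rightarrow> real^'r^'r \<Rightarrow> real^'q^'r \<Rightarrow> real^'q^'r \<Rightarrow> real^'q^'q" where
  "QN S N Z0 Z = S - transpose (Z - Z0) ** N ** (Z - Z0)"

lemma qf_sandwich:
  fixes W :: "real^'a^'b" and N :: "real^'b^'b"
  shows "x \<bullet> ((transpose W ** N ** W) *v x) = (W *v x) \<bullet> (N *v (W *v x))"
proof -
  have "x \<bullet> (transpose W *v y) = (W *v x) \<bullet> y" for y
    using dot_transpose[of W y x] by (simp only: inner_commute)
  then show ?thesis by (simp only: matrix_vector_mul_assoc[symmetric])
qed

lemma qf_QN: "x \<bullet> (QN S N Z0 Z *v x) = x \<bullet> (S *v x) - ((Z - Z0) *v x) \<bullet> (N *v ((Z - Z0) *v x))"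
  by (simp add: QN_def matrix_vector_mult_diff_rdistrib inner_diff_right qf_sandwich)

lemma conv_quad:
  fixes N :: "real^'n^'n"
  assumes symN: "transpose N = N" and uv: "u + v = 1"
  shows "(u *\<^sub>R a + v *\<^sub>R b) \<bullet> (N *v (u *\<^sub>R a + v *\<^sub>R b)) =
    u * (a \<bullet> (N *v a)) + v * (b \<bullet> (N *v b)) - u * v * ((a - b) \<bullet> (N *v (a - b)))"
proof -
  have s: "y \<bullet> (N *v x) = x \<bullet> (N *v y)" for x y using sym_dot[OF symN] by simp
  have e1: "(x + y) \<bullet> (N *v (x + y)) = x \<bullet> (N *v x) + 2 * (x \<bullet> (N *v y)) + y \<bullet> (N *v y)" for x y
  proof -
    have "(x + y) \<bullet> (N *v (x + y)) = x \<bullet> (N *v x) + (x \<bullet> (N *v y) + y \<bullet> (N *v x)) + y \<bullet> (N *v y)"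
      by (simp only: matrix_vector_right_distrib inner_add_left inner_add_right add.assoc)
    then show ?thesis using s[of y x] by simp
  qed
  have e2: "(c *\<^sub>R x) \<bullet> (N *v (d *\<^sub>R y)) = c * d * (x \<bullet> (N *v y))" for c d x y
    by (simp add: matrix_vector_mult_scaleR)
  define qa where "qa = a \<bullet> (N *v a)"
  define qb where "qb = b \<bullet> (N *v b)"
  define r where "r = a \<bullet> (N *v b)"
  have L: "(u *\<^sub>R a + v *\<^sub>R b) \<bullet> (N *v (u *\<^sub>R a + v *\<^sub>R b)) = u * u * qa + 2 * (u * v * r) + v * v * qb"
    unfolding e1 e2 qa_def qb_def r_def ..
  have ab: "a - b = a + (-1) *\<^sub>R b" by simp
  have f1: "a \<bullet> (N *v ((-1) *\<^sub>R b)) = - r"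
    by (simp only: matrix_vector_mult_scaleR inner_scaleR_right r_def; simp)
  have f2: "((-1) *\<^sub>R b) \<bullet> (N *v ((-1) *\<^sub>R b)) = qb"
    by (simp only: matrix_vector_mult_scaleR inner_scaleR_right inner_scaleR_left qb_def; simp)
  have M: "(a - b) \<bullet> (N *v (a - b)) = qa + 2 * (- r) + qb"
    unfolding ab e1 f1 f2 qa_def ..
  have v: "v = 1 - u" using uv by simp
  have "u * u * qa + 2 * (u * v * r) + v * v * qb = u * qa + v * qb - u * v * (qa + 2 * (- r) + qb)"
    unfolding v by (simp add: algebra_simps)
  then show ?thesis using L M qa_def qb_def by simp
qed

lemma part_a:
  fixes N :: "real^'r^'r" and S :: "real^'q^'q"
  assumes symN: "transpose N = N" and psdN: "psd N" and psdS: "psd S"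
  shows "{Z. psd (QN S N Z0 Z)} \<noteq> {} \<and> convex {Z. psd (QN S N Z0 Z)}"
proof
  have "Z0 \<in> {Z. psd (QN S N Z0 Z)}" using psdS by (simp add: QN_def)
  then show "{Z. psd (QN S N Z0 Z)} \<noteq> {}" by blast
  show "convex {Z. psd (QN S N Z0 Z)}" unfolding convex_def
  proof (intro ballI allI impI)
    fix Z1 Z2 u v assume Z1: "Z1 \<in> {Z. psd (QN S N Z0 Z)}" and Z2: "Z2 \<in> {Z. psd (QN S N Z0 Z)}"
      and u: "0 \<le> (u::real)" and v: "0 \<le> (v::real)" and uv: "u + v = 1"
    show "u *\<^sub>R Z1 + v *\<^sub>R Z2 \<in> {Z. psd (QN S N Z0 Z)}" unfolding mem_Collect_eq psd_def
    proof
      fix x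
      define a where "a = (Z1 - Z0) *v x"
      define b where "b = (Z2 - Z0) *v x"
      have W: "(u *\<^sub>R Z1 + v *\<^sub>R Z2 - Z0) *v x = u *\<^sub>R a + v *\<^sub>R b"
      proof -
        have z0: "Z0 = u *\<^sub>R Z0 + v *\<^sub>R Z0" using uv by (metis scaleR_add_left scaleR_one)
        have "u *\<^sub>R (Z1 - Z0) + v *\<^sub>R (Z2 - Z0) = u *\<^sub>R Z1 + v *\<^sub>R Z2 - (u *\<^sub>R Z0 + v *\<^sub>R Z0)"
          by (simp add: algebra_simps)
        then have "u *\<^sub>R Z1 + v *\<^sub>R Z2 - Z0 = u *\<^sub>R (Z1 - Z0) + v *\<^sub>R (Z2 - Z0)"
          using z0 by simp
        then show ?thesis
          by (simp add: a_def b_def matrix_vector_mult_add_rdistrib scaleR_matrix_vector_assoc)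
      qed
      define sx where "sx = x \<bullet> (S *v x)"
      define fa where "fa = a \<bullet> (N *v a)"
      define fb where "fb = b \<bullet> (N *v b)"
      define hh where "hh = (a - b) \<bullet> (N *v (a - b))"
      have h1: "0 \<le> x \<bullet> (S *v x) - a \<bullet> (N *v a)" using Z1 by (simp add: psd_def qf_QN a_def)
      have h2: "0 \<le> x \<bullet> (S *v x) - b \<bullet> (N *v b)" using Z2 by (simp add: psd_def qf_QN b_def)
      have h3: "0 \<le> (a - b) \<bullet> (N *v (a - b))" using psdN psd_def by blast
      have "0 \<le> u * (x \<bullet> (S *v x) - a \<bullet> (N *v a)) + v * (x \<bullet> (S *v x) - b \<bullet> (N *v b))
                + u * v * ((a - b) \<bullet> (N *v (a - b)))"
        using h1 h2 h3 u v by (intro add_nonneg_nonneg mult_nonneg_nonneg) auto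
      also have "\<dots> = (u + v) * sx - (u * fa + v * fb - u * v * hh)"
        unfolding sx_def fa_def fb_def hh_def by (simp add: algebra_simps)
      also have "\<dots> = x \<bullet> (S *v x) - (u *\<^sub>R a + v *\<^sub>R b) \<bullet> (N *v (u *\<^sub>R a + v *\<^sub>R b))"
        unfolding conv_quad[OF symN uv, of a b] uv sx_def fa_def fb_def hh_def by simp
      finally show "0 \<le> x \<bullet> (QN S N Z0 (u *\<^sub>R Z1 + v *\<^sub>R Z2) *v x)"
        by (simp add: qf_QN W)
    qed
  qed
qed

lemma part_d:
  fixes N :: "real^'r^'r" and S :: "real^'q^'q"
  assumes psdN: "psd N"
  shows "{Z. pd (QN S N Z0 Z)} \<noteq> {} \<longleftrightarrow> pd S"
proof
  assume "{Z. pd (QN S N Z0 Z)} \<noteq> {}"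
  then obtain Z where Z: "pd (QN S N Z0 Z)" by blast
  show "pd S" unfolding pd_def
  proof (intro allI impI)
    fix x :: "real^'q" assume "x \<noteq> 0"
    then have "0 < x \<bullet> (QN S N Z0 Z *v x)" using Z pd_def by blast
    moreover have "0 \<le> ((Z - Z0) *v x) \<bullet> (N *v ((Z - Z0) *v x))" using psdN psd_def by blast
    ultimately show "0 < x \<bullet> (S *v x)" by (simp add: qf_QN)
  qed
next
  assume "pd S"
  then have "Z0 \<in> {Z. pd (QN S N Z0 Z)}" by (simp add: QN_def)
  then show "{Z. pd (QN S N Z0 Z)} \<noteq> {}" by blast
qed



definition outer2 :: "real^'a \<Rightarrow> real^'b \<Rightarrow> real^'b^'a" where
  "outer2 v w = (\<chi> i j. v $ i * w $ j)"

lemma outer2_mv: "outer2 v w *v x = (w \<bullet> x) *\<^sub>R v"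
  by (simp add: outer2_def vec_eq_iff matrix_vector_mult_def inner_vec_def sum_distrib_left
      algebra_simps)

lemma mv_axis: "(Z *v axis j 1) $ i = (Z $ i $ j :: real)"
  by (simp add: matrix_vector_mult_def axis_def sum_delta3)

lemma entry_le_norm: "\<bar>(Z::real^'a^'b) $ i $ j\<bar> \<le> norm Z"
  using component_le_norm_cart[of "Z $ i" j] Finite_Cartesian_Product.norm_nth_le[where x=Z and i=i] by linarith

lemma norm_le_entries: "norm (Z::real^'a^'b) \<le> (\<Sum>i\<in>UNIV. \<Sum>j\<in>UNIV. \<bar>Z $ i $ j\<bar>)"
proof -
  have "norm Z \<le> (\<Sum>i\<in>UNIV. norm (Z $ i))"
    unfolding norm_vec_def by (rule L2_set_le_sum) simp
  also have "\<dots> \<le> (\<Sum>i\<in>UNIV. \<Sum>j\<in>UNIV. \<bar>Z $ i $ j\<bar>)"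
    by (rule sum_mono) (rule norm_le_l1_cart)
  finally show ?thesis .
qed

lemma mv_norm:
  fixes M :: "real^'n^'m"
  shows "norm (M *v x) \<le> real CARD('m) * real CARD('n) * norm M * norm x"
proof -
  have "norm (M *v x) \<le> onorm ((*v) M) * norm x"
    by (rule onorm[OF matrix_vector_mul_bounded_linear])
  also have "\<dots> \<le> real CARD('m) * real CARD('n) * norm M * norm x"
    by (intro mult_right_mono onorm_le_matrix_component entry_le_norm) simp
  finally show ?thesis .
qed

lemma pd_lower:
  fixes N :: "real^'n^'n"
  assumes "pd N"
  shows "\<exists>m>0. \<forall>y. m * (norm y)^2 \<le> y \<bullet> (N *v y)"
proof -
  let ?f = "\<lambda>y. y \<bullet> (N *v y)"
  have cont: "continuous_on (sphere (0::real^'n) 1) ?f" by (intro continuous_intros)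
  have ne: "sphere (0::real^'n) 1 \<noteq> {}"
  proof -
    have "axis undefined 1 \<in> sphere (0::real^'n) 1" by simp
    then show ?thesis by blast
  qed
  obtain y0 where y0: "y0 \<in> sphere 0 1" "\<And>y. y \<in> sphere 0 1 \<Longrightarrow> ?f y0 \<le> ?f y"
    using continuous_attains_inf[OF compact_sphere ne cont] by blast
  have "y0 \<noteq> 0" using y0(1) by auto
  then have mpos: "?f y0 > 0" using assms pd_def by blast
  have "?f y0 * (norm y)^2 \<le> ?f y" for y
  proof (cases "y = 0")
    case True then show ?thesis by simp
  next
    case False
    define u where "u = (1 / norm y) *\<^sub>R y"
    have "u \<in> sphere 0 1" using False by (simp add: u_def)
    then have "?f y0 \<le> ?f u" by (rule y0(2))
    moreover have "y = norm y *\<^sub>R u" using False by (simp add: u_def)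
    then have "?f y = (norm y)^2 * ?f u"
      by (metis (no_types, lifting) inner_scaleR_left inner_scaleR_right matrix_vector_mult_scaleR
          mult.assoc power2_eq_square)
    moreover have "?f y0 * (norm y)^2 \<le> ?f u * (norm y)^2"
      using calculation(1) by (rule mult_right_mono) simp
    ultimately show ?thesis by (simp add: mult.commute)
  qed
  then show ?thesis using mpos by blast
qed



lemma part_b:
  fixes N :: "real^'r^'r" and S :: "real^'q^'q" and Z0 :: "real^'q^'r"
  assumes symN: "transpose N = N" and psdN: "psd N" and psdS: "psd S"
  shows "bounded {Z. psd (QN S N Z0 Z)} \<longleftrightarrow> pd N"
proof
  assume bd: "bounded {Z. psd (QN S N Z0 Z)}"
  show "pd N"
  proof (rule ccontr)
    assume "\<not> pd N"
    then obtain v where v: "v \<noteq> 0" "\<not> 0 < v \<bullet> (N *v v)" unfolding pd_def by blast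
    have "0 \<le> v \<bullet> (N *v v)" using psdN psd_def by blast
    then have "v \<bullet> (N *v v) = 0" using v(2) by linarith
    then have Nv: "N *v v = 0" using psd_zero_imp[OF symN psdN] by blast
    define w :: "real^'q" where "w = axis undefined 1"
    define E where "E = outer2 v w"
    have "E *v w = v" by (simp add: E_def outer2_mv w_def)
    then have "E \<noteq> 0" using v(1) by auto
    then have cpos: "norm E > 0" by simp
    obtain K where K: "\<And>Z. Z \<in> {Z. psd (QN S N Z0 Z)} \<Longrightarrow> norm Z \<le> K"
      using bd unfolding bounded_iff by blast
    define t where "t = (K + norm Z0 + 1) / norm E"
    have "norm Z0 \<le> K" using K[of Z0] psdS by (simp add: QN_def)
    then have Kp: "K + norm Z0 + 1 \<ge> 0" using norm_ge_zero[of Z0] by linarith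
    then have tpos: "t \<ge> 0" using cpos by (simp add: t_def)
    define Z where "Z = Z0 + t *\<^sub>R E"
    have "psd (QN S N Z0 Z)" unfolding psd_def
    proof
      fix x
      have "(Z - Z0) *v x = (t * (w \<bullet> x)) *\<^sub>R v"
        by (simp add: Z_def scaleR_matrix_vector_assoc[symmetric] outer2_mv E_def)
      then have "N *v ((Z - Z0) *v x) = 0" by (simp add: matrix_vector_mult_scaleR Nv)
      moreover have "0 \<le> x \<bullet> (S *v x)" using psdS unfolding psd_def by blast
      ultimately show "0 \<le> x \<bullet> (QN S N Z0 Z *v x)" by (simp add: qf_QN)
    qed
    then have "norm Z \<le> K" using K by blast
    moreover have "norm (t *\<^sub>R E) = K + norm Z0 + 1"
      using cpos tpos Kp by (simp add: t_def)
    moreover have "norm (t *\<^sub>R E) \<le> norm Z + norm Z0"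
      using norm_triangle_ineq4[of Z Z0] by (simp add: Z_def)
    ultimately show False by linarith
  qed
next
  assume pdN: "pd N"
  obtain m where m: "m > 0" "\<And>y. m * (norm y)^2 \<le> y \<bullet> (N *v y)" using pd_lower[OF pdN] by blast
  define K where "K = (\<lambda>j::'q. 1 + (axis j 1 \<bullet> (S *v axis j 1)) / m + norm (Z0 *v axis j 1))"
  have colb: "norm (Z *v axis j 1) \<le> K j" if Z: "psd (QN S N Z0 Z)" for Z j
  proof -
    define e :: "real^'q" where "e = axis j 1"
    define w where "w = (Z - Z0) *v e"
    have "0 \<le> e \<bullet> (QN S N Z0 Z *v e)" using Z psd_def by blast
    then have "w \<bullet> (N *v w) \<le> e \<bullet> (S *v e)" by (simp add: qf_QN w_def)
    then have "m * (norm w)^2 \<le> e \<bullet> (S *v e)" using m(2)[of w] by linarith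
    then have w2: "(norm w)^2 \<le> e \<bullet> (S *v e) / m" using m(1) by (simp add: le_divide_eq mult.commute)
    have nw: "norm w \<le> 1 + e \<bullet> (S *v e) / m"
    proof (cases "norm w \<le> 1")
      case True
      have "0 \<le> e \<bullet> (S *v e) / m" using w2 by (meson order_trans zero_le_power2)
      then show ?thesis using True by linarith
    next
      case False
      then have "norm w * 1 \<le> norm w * norm w" by (intro mult_left_mono) auto
      then have "norm w \<le> (norm w)^2" by (simp add: power2_eq_square)
      then show ?thesis using w2 by linarith
    qed
    have "Z *v e = w + Z0 *v e" by (simp add: w_def matrix_vector_mult_diff_rdistrib)
    then have "norm (Z *v e) \<le> norm w + norm (Z0 *v e)" by (simp add: norm_triangle_ineq)
    then show ?thesis using nw by (simp add: K_def e_def)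
  qed
  show "bounded {Z. psd (QN S N Z0 Z)}" unfolding bounded_iff
  proof (intro exI ballI)
    fix Z assume "Z \<in> {Z. psd (QN S N Z0 Z)}"
    then have Z: "psd (QN S N Z0 Z)" by simp
    have "norm Z \<le> (\<Sum>i\<in>UNIV. \<Sum>j\<in>UNIV. \<bar>Z $ i $ j\<bar>)" by (rule norm_le_entries)
    also have "\<dots> \<le> (\<Sum>i\<in>(UNIV::'r set). \<Sum>j\<in>UNIV. K j)"
    proof (intro sum_mono)
      fix i j
      have "\<bar>Z $ i $ j\<bar> = \<bar>(Z *v axis j 1) $ i\<bar>" by (simp add: mv_axis)
      also have "\<dots> \<le> norm (Z *v axis j 1)" by (rule component_le_norm_cart)
      also have "\<dots> \<le> K j" by (rule colb[OF Z])
      finally show "\<bar>Z $ i $ j\<bar> \<le> K j" .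
    qed
    finally show "norm Z \<le> (\<Sum>i\<in>(UNIV::'r set). \<Sum>j\<in>UNIV. K j)" .
  qed
qed



lemma small_quad:
  fixes L K m d :: real
  assumes L: "L \<ge> 0" and K: "K > 0" and m: "m > 0" and d: "d = min 1 (m / (2 * K^2 * (L + 1)))"
    and n: "0 \<le> n" "n < d"
  shows "L * K^2 * n^2 \<le> m / 2"
proof -
  have dpos: "d > 0" using d L K m by simp
  have "n^2 \<le> n" using n d by (simp add: power2_eq_square mult_le_cancel_left1 )
      (metis min.strict_boundedE mult_left_le_one_le order_less_imp_le)
  also have "\<dots> \<le> m / (2 * K^2 * (L + 1))" using n d by linarith
  finally have n2: "n^2 \<le> m / (2 * K^2 * (L + 1))" .
  define q where "q = m / (2 * K^2 * (L + 1))"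
  have nz: "2 * K^2 * (L + 1) \<noteq> 0" using K L by simp
  have q: "2 * K^2 * (L + 1) * q = m" unfolding q_def using nz by simp
  have q0: "q \<ge> 0" unfolding q_def using K L m by simp
  have "L * K^2 * n^2 \<le> L * K^2 * q"
    using n2 L K by (intro mult_left_mono) (auto simp: q_def)
  also have "\<dots> \<le> (L + 1) * K^2 * q" using q0 by (intro mult_right_mono) auto
  also have "\<dots> = (2 * K^2 * (L + 1) * q) / 2" by simp
  also have "\<dots> = m / 2" using q by simp
  finally show ?thesis by simp
qed

lemma part_c:
  fixes N :: "real^'r^'r" and S :: "real^'q^'q" and Z0 :: "real^'q^'r"
  assumes symN: "transpose N = N" and psdN: "psd N" and psdS: "psd S"
  shows "interior {Z. psd (QN S N Z0 Z)} \<noteq> {} \<longleftrightarrow> (N = 0 \<or> pd S)"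
proof
  assume int: "interior {Z. psd (QN S N Z0 Z)} \<noteq> {}"
  show "N = 0 \<or> pd S"
  proof (rule ccontr)
    assume "\<not> (N = 0 \<or> pd S)"
    then have N0: "N \<noteq> 0" and nS: "\<not> pd S" by auto
    obtain x where x: "x \<noteq> 0" "\<not> 0 < x \<bullet> (S *v x)" using nS unfolding pd_def by blast
    have "0 \<le> x \<bullet> (S *v x)" using psdS psd_def by blast
    then have xS: "x \<bullet> (S *v x) = 0" using x(2) by linarith
    have zero: "N *v ((Z - Z0) *v x) = 0" if Z: "psd (QN S N Z0 Z)" for Z
    proof -
      have "0 \<le> x \<bullet> (QN S N Z0 Z *v x)" using Z psd_def by blast
      then have a: "((Z - Z0) *v x) \<bullet> (N *v ((Z - Z0) *v x)) \<le> 0" by (simp add: qf_QN xS)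
      have "0 \<le> ((Z - Z0) *v x) \<bullet> (N *v ((Z - Z0) *v x))" using psdN psd_def by blast
      then have "((Z - Z0) *v x) \<bullet> (N *v ((Z - Z0) *v x)) = 0" using a by linarith
      then show ?thesis using psd_zero_imp[OF symN psdN] by blast
    qed
    obtain y where y: "N *v y \<noteq> 0" using N0 by (metis matrix_eq matrix_vector_mult_0)
    obtain Z1 where "Z1 \<in> interior {Z. psd (QN S N Z0 Z)}" using int by blast
    then obtain e where e: "e > 0" "ball Z1 e \<subseteq> {Z. psd (QN S N Z0 Z)}"
      unfolding mem_interior by blast
    have Z1: "psd (QN S N Z0 Z1)" using e by (metis centre_in_ball mem_Collect_eq subsetD)
    define E where "E = outer2 y x"
    have xx: "x \<bullet> x > 0" using x(1) by simp
    have Ex: "E *v x = (x \<bullet> x) *\<^sub>R y" by (simp add: E_def outer2_mv)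
    have "E *v x \<noteq> 0" using y xx Ex by (auto simp: matrix_vector_mult_scaleR)
    then have "E \<noteq> 0" by auto
    then have cpos: "norm E > 0" by simp
    define t where "t = e / (2 * norm E)"
    have tpos: "t > 0" using e cpos by (simp add: t_def)
    define Z where "Z = Z1 + t *\<^sub>R E"
    have "dist Z1 Z = e / 2" using cpos tpos e by (simp add: Z_def dist_norm t_def)
    then have "Z \<in> ball Z1 e" using e by simp
    then have "psd (QN S N Z0 Z)" using e by blast
    then have "N *v ((Z - Z0) *v x) = 0" by (rule zero)
    moreover have "(Z - Z0) *v x = (Z1 - Z0) *v x + (t * (x \<bullet> x)) *\<^sub>R y"
      by (simp add: Z_def algebra_simps scaleR_matrix_vector_assoc[symmetric] Ex)
    ultimately have "(t * (x \<bullet> x)) *\<^sub>R (N *v y) = 0"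
      using zero[OF Z1] by (simp add: matrix_vector_right_distrib matrix_vector_mult_scaleR)
    then show False using tpos xx y by simp
  qed
next
  assume "N = 0 \<or> pd S"
  then show "interior {Z. psd (QN S N Z0 Z)} \<noteq> {}"
  proof
    assume "N = 0"
    then have "{Z. psd (QN S N Z0 Z)} = UNIV" using psdS by (simp add: QN_def)
    then show ?thesis by simp
  next
    assume pdS: "pd S"
    obtain m where m: "m > 0" "\<And>y. m * (norm y)^2 \<le> y \<bullet> (S *v y)" using pd_lower[OF pdS] by blast
    define K where "K = real CARD('r) * real CARD('q)"
    have Kpos: "K > 0" by (simp add: K_def)
    define L where "L = onorm ((*v) N)"
    have L0: "L \<ge> 0" unfolding L_def by (rule onorm_pos_le[OF matrix_vector_mul_bounded_linear])
    define d where "d = min 1 (m / (2 * K^2 * (L + 1)))"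
    have dpos: "d > 0" using m Kpos L0 by (simp add: d_def)
    have "ball Z0 d \<subseteq> {Z. psd (QN S N Z0 Z)}"
    proof
      fix Z assume "Z \<in> ball Z0 d"
      then have nd: "norm (Z - Z0) < d" by (simp add: dist_norm norm_minus_commute)
      have sq: "L * K^2 * (norm (Z - Z0))^2 \<le> m / 2"
        by (rule small_quad[OF L0 Kpos m(1) d_def norm_ge_zero nd])
      show "Z \<in> {Z. psd (QN S N Z0 Z)}" unfolding mem_Collect_eq psd_def
      proof
        fix x
        define y where "y = (Z - Z0) *v x"
        have h1: "norm y \<le> K * norm (Z - Z0) * norm x"
          using mv_norm[of "Z - Z0" x] by (simp add: y_def K_def)
        have "y \<bullet> (N *v y) \<le> norm y * norm (N *v y)" by (rule norm_cauchy_schwarz)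
        also have "\<dots> \<le> norm y * (L * norm y)"
          by (intro mult_left_mono) (simp_all add: L_def onorm[OF matrix_vector_mul_bounded_linear])
        also have "\<dots> = L * (norm y)^2" by (simp add: power2_eq_square)
        also have "\<dots> \<le> L * (K * norm (Z - Z0) * norm x)^2"
          using h1 L0 by (intro mult_left_mono power_mono) auto
        also have "\<dots> = (L * K^2 * (norm (Z - Z0))^2) * (norm x)^2" by (simp add: power_mult_distrib)
        also have "\<dots> \<le> (m / 2) * (norm x)^2" using sq by (intro mult_right_mono) auto
        also have "\<dots> \<le> m * (norm x)^2" using m(1) by (intro mult_right_mono) auto
        also have "\<dots> \<le> x \<bullet> (S *v x)" by (rule m(2))
        finally show "0 \<le> x \<bullet> (QN S N Z0 Z *v x)" by (simp add: qf_QN y_def)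
      qed
    qed
    then have "Z0 \<in> interior {Z. psd (QN S N Z0 Z)}" using dpos unfolding mem_interior by blast
    then show ?thesis by blast
  qed
qed



lemma outer_zero: "outer (0::real^'n) = 0"
  by (simp add: outer_def vec_eq_iff)

lemma outer_sandwich:
  fixes W :: "real^'q^'r"
  shows "transpose W ** outer v ** W = outer (transpose W *v v)"
  unfolding matrix_eq
proof
  fix x
  have d: "v \<bullet> (W *v x) = (transpose W *v v) \<bullet> x" using dot_transpose[of W v x] by simp
  have "(transpose W ** outer v ** W) *v x = transpose W *v (outer v *v (W *v x))"
    by (simp only: matrix_vector_mul_assoc matrix_mul_assoc)
  also have "\<dots> = (v \<bullet> (W *v x)) *\<^sub>R (transpose W *v v)"
    by (simp only: outer_mv matrix_vector_mult_scaleR)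
  also have "\<dots> = outer (transpose W *v v) *v x" by (simp only: outer_mv d)
  finally show "(transpose W ** outer v ** W) *v x = outer (transpose W *v v) *v x" .
qed

lemma sandwich_sum:
  fixes W :: "real^'q^'r"
  shows "transpose W ** sum_list (map outer vs) ** W = sum_list (map (\<lambda>v. outer (transpose W *v v)) vs)"
proof (induction vs)
  case Nil then show ?case by simp
next
  case (Cons a vs)
  have "transpose W ** sum_list (map outer (a # vs)) ** W =
        transpose W ** outer a ** W + transpose W ** sum_list (map outer vs) ** W"
    by (simp add: matrix_add_ldistrib madd_r)
  then show ?case using Cons by (simp add: outer_sandwich)
qed

lemma part_e:
  fixes N :: "real^'r^'r" and S :: "real^'q^'q" and Z0 :: "real^'q^'r"
  assumes symN: "transpose N = N" and psdN: "psd N" and symS: "transpose S = S" and psdS: "psd S"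
  shows "{Z. QN S N Z0 Z = 0} \<noteq> {} \<longleftrightarrow> rank S \<le> rank N"
proof
  assume "{Z. QN S N Z0 Z = 0} \<noteq> {}"
  then obtain Z where "QN S N Z0 Z = 0" by blast
  then have "S = transpose (Z - Z0) ** N ** (Z - Z0)" by (simp add: QN_def)
  then have "rank S \<le> rank (transpose (Z - Z0) ** N)" using rank_mul_le_left by metis
  also have "\<dots> \<le> rank N" by (rule rank_mul_le_right)
  finally show "rank S \<le> rank N" .
next
  assume rk: "rank S \<le> rank N"
  obtain vs where vs: "distinct vs" "independent (set vs)" "N = sum_list (map outer vs)"
    "length vs = rank N" using psd_decomp_rank[OF symN psdN] by blast
  obtain us where us: "S = sum_list (map outer us)" "length us = rank S"
    using psd_decomp_rank[OF symS psdS] by blast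
  define k where "k = length vs"
  define us' where "us' = us @ replicate (k - length us) 0"
  have lus': "length us' = k" using rk us(2) vs(4) by (simp add: us'_def k_def)
  have Sus': "S = sum_list (map outer us')"
  proof -
    have "sum_list (map outer (replicate n (0::real^'q))) = 0" for n
      by (induction n) (simp_all add: outer_zero)
    then show ?thesis by (simp add: us'_def us(1) outer_zero)
  qed
  define f where "f = (\<lambda>x. the (map_of (zip vs us') x))"
  obtain T where T: "linear T" "\<And>x. x \<in> set vs \<Longrightarrow> T x = f x"
    using linear_independent_extend[OF vs(2), of f] by blast
  have mapT: "map T vs = us'"
  proof (rule nth_equalityI)
    show "length (map T vs) = length us'" using lus' by (simp add: k_def)
    fix i assume "i < length (map T vs)"
    then have i: "i < length vs" by simp
    have "T (vs ! i) = f (vs ! i)" using T(2) i by simp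
    also have "\<dots> = us' ! i" unfolding f_def
      using map_of_zip_nth[of vs us' i] lus' vs(1) i by (simp add: k_def)
    finally show "map T vs ! i = us' ! i" using i by simp
  qed
  define W :: "real^'q^'r" where "W = transpose (matrix T)"
  have WT: "transpose W *v v = T v" for v using T(1) by (simp add: W_def matrix_works)
  have "transpose W ** N ** W = S"
  proof -
    have "transpose W ** N ** W = sum_list (map (\<lambda>v. outer (transpose W *v v)) vs)"
      unfolding vs(3) by (rule sandwich_sum)
    also have "\<dots> = sum_list (map outer (map T vs))"
      by (simp only: WT map_map o_def)
    also have "\<dots> = S" using mapT Sus' by simp
    finally show ?thesis .
  qed
  then have "QN S N Z0 (Z0 + W) = 0" by (simp add: QN_def)
  then show "{Z. QN S N Z0 Z = 0} \<noteq> {}" by blast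
qed



lemma blk_sym:
  fixes P :: "real^('q::finite + 'r::finite)^('q + 'r)"
  assumes "transpose P = P"
  shows "transpose (blk22 P) = blk22 P" "blk21 P = transpose (blk12 P)" "transpose (blk11 P) = blk11 P"
proof -
  have s: "P $ j $ i = P $ i $ j" for i j
  proof -
    have "transpose P $ i $ j = P $ i $ j" using assms by simp
    then show ?thesis by (simp add: transpose_def)
  qed
  show "transpose (blk22 P) = blk22 P" "blk21 P = transpose (blk12 P)" "transpose (blk11 P) = blk11 P"
    by (simp_all add: vec_eq_iff transpose_def blk22_def blk21_def blk12_def blk11_def s)
qed

lemma neg_mv: "(- M) *v x = - (M *v (x::real^'n))"
  by (simp add: vec_eq_iff matrix_vector_mult_def sum_negf)

lemma mv_neg: "M *v (- x) = - (M *v (x::real^'n))"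
  by (simp add: vec_eq_iff matrix_vector_mult_def sum_negf)

lemma rank_neg: "rank (- (M::real^'n^'m)) = rank M"
proof -
  have "range ((*v) (- M)) = range ((*v) M)"
  proof
    show "range ((*v) (- M)) \<subseteq> range ((*v) M)"
    proof
      fix y assume "y \<in> range ((*v) (- M))"
      then obtain x where "y = (- M) *v x" by auto
      then have "y = M *v (- x)" by (simp add: neg_mv mv_neg)
      then show "y \<in> range ((*v) M)" by auto
    qed
    show "range ((*v) M) \<subseteq> range ((*v) (- M))"
    proof
      fix y assume "y \<in> range ((*v) M)"
      then obtain x where "y = M *v x" by auto
      then have "y = (- M) *v (- x)" by (simp add: neg_mv mv_neg)
      then show "y \<in> range ((*v) (- M))" by auto
    qed
  qed
  then show ?thesis by (simp add: rank_dim_range)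
qed

theorem mainTheorem1:
  fixes P :: "real^('q::finite + 'r::finite)^('q + 'r)"
  assumes "P \<in> PiSet"
  shows "(Zr P \<noteq> {} \<and> convex (Zr P))
       \<and> (bounded (Zr P) \<longleftrightarrow> nd (blk22 P))
       \<and> (interior (Zr P) \<noteq> {} \<longleftrightarrow> (blk22 P = 0 \<or> pd (schur P)))
       \<and> (Zr_plus P \<noteq> {} \<longleftrightarrow> pd (schur P))
       \<and> (Zr_zero P \<noteq> {} \<longleftrightarrow> rank (blk22 P) \<ge> rank (schur P))"
proof -
  have symP: "transpose P = P" and nsdA: "psd (- blk22 P)" and psdS: "psd (schur P)"
    and ker: "mker (blk22 P) \<subseteq> mker (blk12 P)"
    using assms by (auto simp: PiSet_def sym_mat_def nsd_def)
  define A where "A = blk22 P"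
  define B where "B = blk12 P"
  define D where "D = blk11 P"
  define X where "X = mp_pinv A"
  define N where "N = - A"
  define S where "S = schur P"
  define Z0 where "Z0 = - (X ** transpose B)"
  have symA: "transpose A = A" and C: "blk21 P = transpose B" and symD: "transpose D = D"
    using blk_sym[OF symP] by (simp_all add: A_def B_def D_def)
  have Xp: "A ** X ** A = A" "transpose (A ** X) = A ** X"
    using mp_pinv_props[OF symA] by (simp_all add: X_def)
  have kerv: "B *v v = 0" if "A *v v = 0" for v
    using ker that by (auto simp: mker_def A_def B_def)
  have Sdef: "S = D - B ** X ** transpose B"
    by (simp add: S_def schur_def A_def B_def D_def X_def C)
  have symN: "transpose N = N" by (simp add: N_def transpose_neg symA)
  have psdN: "psd N" using nsdA by (simp add: N_def A_def)
  have psdS': "psd S" using psdS by (simp add: S_def)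
  have symS: "transpose S = S"
    using key_identity(2)[OF symA Xp(1) Xp(2) kerv] symD by (simp add: Sdef transpose_diff)
  have Q: "qform P Z = QN S N Z0 Z" for Z
  proof -
    have "qform P Z = D + B ** Z + transpose Z ** transpose B + transpose Z ** A ** Z"
      by (simp add: qform_blocks A_def B_def D_def C)
    also have "\<dots> = S + transpose (Z + X ** transpose B) ** A ** (Z + X ** transpose B)"
      unfolding Sdef by (rule key_identity(1)[OF symA Xp(1) Xp(2) kerv])
    also have "\<dots> = QN S N Z0 Z"
      by (simp add: QN_def N_def Z0_def mneg_l mneg_r)
    finally show ?thesis .
  qed
  have Zr_eq: "Zr P = {Z. psd (QN S N Z0 Z)}" by (simp add: Zr_def Q)
  have Zp_eq: "Zr_plus P = {Z. pd (QN S N Z0 Z)}" by (simp add: Zr_plus_def Q)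
  have Z0_eq: "Zr_zero P = {Z. QN S N Z0 Z = 0}" by (simp add: Zr_zero_def Q)
  have ndA: "nd (blk22 P) \<longleftrightarrow> pd N" by (simp add: nd_def N_def A_def)
  have A0: "blk22 P = 0 \<longleftrightarrow> N = 0" by (simp add: N_def A_def)
  have rk: "rank (blk22 P) = rank N" by (simp add: N_def A_def rank_neg)
  show ?thesis
    unfolding Zr_eq Zp_eq Z0_eq ndA A0 rk S_def[symmetric]
    using part_a[OF symN psdN psdS'] part_b[OF symN psdN psdS'] part_c[OF symN psdN psdS']
      part_d[OF psdN] part_e[OF symN psdN symS psdS']
    by blast
qed


end
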